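(* Let $p$ be a prime and let $G$ be a finite Abelian $p$-group. Let $S$ be a normal sequence over $G$ with $|S|=\mathsf{D}(G)+i-1$, where $i\in\{1,2,\dots,p-1\}$. Then $S=0^iT$, i.e. $S$ consists of $i$ copies of the zero element $0\in G$ together with a sequence $T$ over $G$ that is zero-sumfree.
   Context: A sequence over a finite Abelian group $G$ (written additively) is a finite multiset of elements of $G$ (repetitions allowed, order disregarded); its length $|S|$ is the number of terms counted with multiplicity, and a subsequence is a sub-multiset. For $S=g_1\cdots g_\ell$, $\sigma(S)=\sum_i g_i$. $S$ is a zero-sum sequence if $\sigma(S)=0$; $S$ is zero-sumfree if no non-empty subsequence has sum $0$. The Davenport constant $\mathsf{D}(G)$ is the smallest positive integer $t$ such that every sequence over $G$ of length at least $t$ contains a non-empty zero-sum subsequence. A sequence $S$ over $G$ with $|S|\ge \mathsf{D}(G)$ is called normal if every zero-sum subsequence $S'$ of $S$ satisfies $|S'|\le |S|-\mathsf{D}(G)+1$. The notation $0^iT$ denotes the sequence obtained from $T$ by adjoining $i$ copies of $0$. *)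

theory Defs
  imports Main "HOL-Library.Multiset" "HOL-Computational_Algebra.Primes"
begin

text \<open>Sequences over an additive abelian group 'g are finite multisets of elements of 'g.\<close>

definition zero_sum :: "'g::comm_monoid_add multiset \<Rightarrow> bool" where
  "zero_sum S \<longleftrightarrow> sum_mset S = 0"

definition zero_sumfree :: "'g::comm_monoid_add multiset \<Rightarrow> bool" where
  "zero_sumfree S \<longleftrightarrow> (\<forall>S'. S' \<subseteq># S \<and> S' \<noteq> {#} \<longrightarrow> sum_mset S' \<noteq> 0)"

definition davenport :: "'g::{ab_group_add,finite} itself \<Rightarrow> nat" where
  "davenport _ = (LEAST t. 0 < t \<and>
      (\<forall>S :: 'g multiset. t \<le> size S \<longrightarrow>
         (\<exists>S'. S' \<subseteq># S \<and> S' \<noteq> {#} \<and> sum_mset S' = 0)))"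

definition normal_seq :: "'g::{ab_group_add,finite} multiset \<Rightarrow> bool" where
  "normal_seq S \<longleftrightarrow> davenport TYPE('g) \<le> size S \<and>
     (\<forall>S'. S' \<subseteq># S \<and> zero_sum S' \<longrightarrow> size S' \<le> size S - davenport TYPE('g) + 1)"

end

theory Submission
  imports Defs "HOL-Number_Theory.Cong"
begin

fun nmul :: "nat \<Rightarrow> 'g::ab_group_add \<Rightarrow> 'g" where
  "nmul 0 g = 0"
| "nmul (Suc n) g = g + nmul n g"

lemma nmul_add: "nmul (a + b) g = nmul a g + nmul b g"
  by (induction a) (auto simp: algebra_simps)

lemma nmul_mult: "nmul (a * b) g = nmul a (nmul b g)"
  by (induction a) (auto simp: nmul_add)

lemma nmul_distrib: "nmul n (g + h) = nmul n g + nmul n h"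
  by (induction n) (auto simp: algebra_simps)

lemma nmul_zero[simp]: "nmul n 0 = 0"
  by (induction n) auto

lemma nmul_one[simp]: "nmul 1 g = g" by simp

lemma nmul_neg: "nmul n (- g) = - nmul n g"
  by (induction n) (auto simp: algebra_simps)

lemma nmul_diff: "nmul n (g - h) = nmul n g - nmul n h"
  using nmul_distrib[of n g "-h"] by (simp add: nmul_neg)

lemma sum_const_nmul: "finite A \<Longrightarrow> (\<Sum>x\<in>A. g) = nmul (card A) g"
  by (induction A rule: finite_induct) auto

datatype 'g gr = GR (coef: "'g \<Rightarrow> int")

lemma gr_eqI: "(\<And>x. coef a x = coef b x) \<Longrightarrow> a = b"
  by (cases a, cases b) auto

lemma sum_delta_mult: "(\<Sum>y\<in>(UNIV::'g::finite set). (if y = a then c else 0) * (f y::int)) = c * f a"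
proof -
  have "(\<Sum>y\<in>(UNIV::'g set). (if y = a then c else 0) * f y) = (\<Sum>y\<in>UNIV. if y = a then c * f y else 0)"
    by (rule sum.cong) auto
  also have "\<dots> = c * f a" by (simp add: sum.delta')
  finally show ?thesis .
qed

lemma mult_comm_aux: "(\<Sum>y\<in>(UNIV::'g::{ab_group_add,finite} set). (a y::int) * b (x - y)) = (\<Sum>y\<in>UNIV. b y * a (x - y))"
  by (rule sum.reindex_bij_witness[of _ "\<lambda>y. x - y" "\<lambda>y. x - y"]) (auto simp: mult.commute algebra_simps)

lemma mult_assoc_aux:
  "(\<Sum>y\<in>(UNIV::'g::{ab_group_add,finite} set). (\<Sum>z\<in>UNIV. (a z::int) * b (y - z)) * c (x - y)) =
   (\<Sum>z\<in>UNIV. a z * (\<Sum>w\<in>UNIV. b w * c (x - (z + w))))"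
proof -
  have "(\<Sum>y\<in>(UNIV::'g set). (\<Sum>z\<in>UNIV. a z * b (y - z)) * c (x - y)) =
        (\<Sum>z\<in>UNIV. \<Sum>y\<in>UNIV. a z * (b (y - z) * c (x - y)))"
    by (subst sum.swap) (simp add: sum_distrib_right mult.assoc)
  also have "\<dots> = (\<Sum>z\<in>UNIV. a z * (\<Sum>w\<in>UNIV. b w * c (x - (z + w))))"
  proof (rule sum.cong[OF refl])
    fix z
    have "(\<Sum>y\<in>(UNIV::'g set). b (y - z) * c (x - y)) = (\<Sum>w\<in>UNIV. b w * c (x - (z + w)))"
      by (rule sum.reindex_bij_witness[of _ "\<lambda>w. w + z" "\<lambda>y. y - z"]) (auto simp: algebra_simps)
    then show "(\<Sum>y\<in>UNIV. a z * (b (y - z) * c (x - y))) =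
         a z * (\<Sum>w\<in>UNIV. b w * c (x - (z + w)))"
      by (metis (no_types) sum_distrib_left)
  qed
  finally show ?thesis .
qed

instantiation gr :: ("{ab_group_add,finite}") comm_ring_1
begin
definition "0 = GR (\<lambda>_. 0)"
definition "1 = GR (\<lambda>x. if x = 0 then 1 else 0)"
definition "a + b = GR (\<lambda>x. coef a x + coef b x)"
definition "a - b = GR (\<lambda>x. coef a x - coef b x)"
definition "- a = GR (\<lambda>x. - coef a x)"
definition "a * b = GR (\<lambda>x. \<Sum>y\<in>UNIV. coef a y * coef b (x - y))"

lemma coef_simps[simp]:
  "coef 0 x = 0" "coef 1 x = (if x = 0 then 1 else 0)"
  "coef (a + b) x = coef a x + coef b x"
  "coef (a - b) x = coef a x - coef b x"
  "coef (- a) x = - coef a x"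
  "coef (a * b) x = (\<Sum>y\<in>UNIV. coef a y * coef b (x - y))"
  by (simp_all add: zero_gr_def one_gr_def plus_gr_def minus_gr_def uminus_gr_def times_gr_def)

instance
proof
  fix a b c :: "'a gr"
  show "a * b * c = a * (b * c)"
    by (rule gr_eqI) (simp add: mult_assoc_aux[of "coef a" "coef b" "coef c"] diff_diff_eq)
  show "a * b = b * a"
    by (rule gr_eqI) (simp add: mult_comm_aux[of "coef a" "coef b"])
  show "1 * a = a"
  proof (rule gr_eqI)
    fix x
    show "coef (1 * a) x = coef a x" by (simp add: sum_delta_mult)
  qed
  show "(a + b) * c = a * c + b * c"
    by (rule gr_eqI) (simp add: distrib_right sum.distrib)
  show "a + b + c = a + (b + c)" by (rule gr_eqI) simp
  show "a + b = b + a" by (rule gr_eqI) simp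
  show "0 + a = a" by (rule gr_eqI) simp
  show "- a + a = 0" by (rule gr_eqI) simp
  show "a - b = a + - b" by (rule gr_eqI) simp
  show "(0::'a gr) \<noteq> 1"
  proof
    assume "(0::'a gr) = 1"
    then have "coef (0::'a gr) 0 = coef 1 0" by simp
    then show False by simp
  qed
qed
end

definition mon :: "'g::{ab_group_add,finite} \<Rightarrow> 'g gr" where
  "mon g = GR (\<lambda>x. if x = g then 1 else 0)"

lemma coef_mon[simp]: "coef (mon g) x = (if x = g then 1 else 0)"
  by (simp add: mon_def)

lemma mon_zero[simp]: "mon 0 = 1"
  by (rule gr_eqI) simp

lemma mon_mult: "mon a * mon b = mon (a + b)"
proof (rule gr_eqI)
  fix x
  show "coef (mon a * mon b) x = coef (mon (a + b)) x"
    by (auto simp: sum_delta_mult algebra_simps)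
qed

lemma mon_pow: "mon a ^ n = mon (nmul n a)"
  by (induction n) (auto simp: mon_mult)

lemma coef_of_nat: "coef (of_nat n) x = (if x = 0 then int n else 0)"
  by (induction n) auto

lemma coef_of_nat_mult: "coef (of_nat n * a) x = int n * coef a x"
  by (simp add: coef_of_nat sum_delta_mult)

definition pz :: "nat \<Rightarrow> 'g::{ab_group_add,finite} gr \<Rightarrow> bool" where
  "pz p a \<longleftrightarrow> (\<forall>x. int p dvd coef a x)"

lemma pz_0[simp]: "pz p 0" by (simp add: pz_def)
lemma pz_add: "pz p a \<Longrightarrow> pz p b \<Longrightarrow> pz p (a + b)" by (simp add: pz_def)
lemma pz_diff: "pz p a \<Longrightarrow> pz p b \<Longrightarrow> pz p (a - b)" by (simp add: pz_def)
lemma pz_multL: "pz p a \<Longrightarrow> pz p (a * b)"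
  by (auto simp: pz_def intro!: dvd_sum)
lemma pz_multR: "pz p b \<Longrightarrow> pz p (a * b)"
  using pz_multL[of p b a] by (simp add: mult.commute)
lemma pz_of_nat: "p dvd n \<Longrightarrow> pz p (of_nat n * a)"
  unfolding pz_def coef_of_nat_mult by auto
lemma pz_sum: "(\<And>x. x \<in> A \<Longrightarrow> pz p (f x)) \<Longrightarrow> pz p (sum f A)"
  by (induction A rule: infinite_finite_induct) (auto intro: pz_add)

lemma pz_multI: "pz p a \<Longrightarrow> pz p (a * b * c)" by (intro pz_multL)

lemma pz_pow_cong: "pz p (a - b) \<Longrightarrow> pz p (a ^ n - b ^ n)"
proof (induction n)
  case 0 then show ?case by simp
next
  case (Suc n)
  have "a ^ Suc n - b ^ Suc n = a * (a ^ n - b ^ n) + (a - b) * b ^ n"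
    by (simp add: algebra_simps)
  moreover have "pz p (a * (a ^ n - b ^ n) + (a - b) * b ^ n)"
    using Suc by (intro pz_add pz_multR pz_multL) auto
  ultimately show ?case by simp
qed

lemma frob1:
  fixes h :: "'g::{ab_group_add,finite}"
  assumes p: "prime p"
  shows "pz p ((1 - mon h) ^ p - (1 - mon (nmul p h)))"
proof -
  define n where "n = p - 2"
  have n: "p = Suc (Suc n)"
    using prime_ge_2_nat[OF p] unfolding n_def by simp
  define f where "f k = of_nat (p choose k) * (- mon h) ^ k * (1::'g gr) ^ (p - k)" for k
  have "(1 - mon h) ^ p = (- mon h + 1) ^ p" by simp
  also have "\<dots> = (\<Sum>k\<le>p. f k)" unfolding f_def by (rule binomial_ring)
  also have "\<dots> = f 0 + (\<Sum>k\<le>n. f (Suc k)) + f p"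
    unfolding n by (simp only: sum.atMost_Suc_shift[of _ "Suc n"] sum.atMost_Suc[of _ n] add.assoc)
  finally have eq: "(1 - mon h) ^ p = f 0 + (\<Sum>k\<le>n. f (Suc k)) + f p" .
  have mid: "pz p (\<Sum>k\<le>n. f (Suc k))"
  proof (rule pz_sum)
    fix k assume "k \<in> {..n}"
    then have "p dvd (p choose Suc k)" using p n by (intro dvd_choose_prime) auto
    then show "pz p (f (Suc k))" unfolding f_def mult.assoc by (rule pz_of_nat)
  qed
  have f0: "f 0 = 1" by (simp add: f_def)
  have fp: "f p = (-1) ^ p * mon (nmul p h)"
    by (simp add: f_def power_minus[of "mon h"] mon_pow)
  have last: "pz p ((-1) ^ p * mon (nmul p h) + mon (nmul p h))"
  proof (cases "p = 2")
    case True
    have "(-1) ^ p * mon (nmul p h) + mon (nmul p h) = of_nat 2 * mon (nmul p h)"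
      using True by (simp add: algebra_simps)
    then show ?thesis using True pz_of_nat[of p 2] by simp
  next
    case False
    then have "odd p" using prime_odd_nat[OF p] prime_ge_2_nat[OF p] by simp
    then show ?thesis by simp
  qed
  have e2: "(1 - mon h) ^ p - (1 - mon (nmul p h)) =
        (\<Sum>k\<le>n. f (Suc k)) + ((-1) ^ p * mon (nmul p h) + mon (nmul p h))"
    unfolding eq f0 fp by (simp add: algebra_simps)
  show ?thesis by (subst e2) (rule pz_add[OF mid last])
qed

lemma frob:
  fixes h :: "'g::{ab_group_add,finite}"
  assumes p: "prime p"
  shows "pz p ((1 - mon h) ^ (p ^ e) - (1 - mon (nmul (p ^ e) h)))"
proof (induction e)
  case 0 then show ?case by simp
next
  case (Suc e)
  have a: "pz p (((1 - mon h) ^ (p ^ e)) ^ p - (1 - mon (nmul (p ^ e) h)) ^ p)"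
    by (rule pz_pow_cong[OF Suc])
  have b: "pz p ((1 - mon (nmul (p ^ e) h)) ^ p - (1 - mon (nmul p (nmul (p ^ e) h))))"
    by (rule frob1[OF p])
  have c: "nmul p (nmul (p ^ e) h) = nmul (p ^ Suc e) h"
    by (simp add: nmul_mult[symmetric] mult.commute)
  have eq: "(1 - mon h) ^ (p ^ Suc e) - (1 - mon (nmul (p ^ Suc e) h)) =
     (((1 - mon h) ^ (p ^ e)) ^ p - (1 - mon (nmul (p ^ e) h)) ^ p) +
     ((1 - mon (nmul (p ^ e) h)) ^ p - (1 - mon (nmul p (nmul (p ^ e) h))))"
    unfolding c by (simp add: power_mult[symmetric] mult.commute)
  show ?case by (subst eq) (rule pz_add[OF a b])
qed

lemma geom: "\<exists>u. 1 - mon (nmul j h) = (1 - mon h) * u"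
proof -
  have "1 - mon (nmul j h) = 1 ^ j - mon h ^ j" by (simp add: mon_pow)
  also have "\<dots> = (1 - mon h) * (\<Sum>i<j. mon h ^ (j - Suc i) * 1 ^ i)"
    by (rule power_diff_sumr2)
  finally show ?thesis by blast
qed


definition sg :: "'g::ab_group_add set \<Rightarrow> bool" where
  "sg H \<longleftrightarrow> 0 \<in> H \<and> (\<forall>x\<in>H. \<forall>y\<in>H. x + y \<in> H) \<and> (\<forall>x\<in>H. - x \<in> H)"

lemma sg_0: "sg H \<Longrightarrow> 0 \<in> H" by (simp add: sg_def)
lemma sg_add: "sg H \<Longrightarrow> x \<in> H \<Longrightarrow> y \<in> H \<Longrightarrow> x + y \<in> H" by (simp add: sg_def)
lemma sg_neg: "sg H \<Longrightarrow> x \<in> H \<Longrightarrow> - x \<in> H" by (simp add: sg_def)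
lemma sg_diff: "sg H \<Longrightarrow> x \<in> H \<Longrightarrow> y \<in> H \<Longrightarrow> x - y \<in> H"
  using sg_add[of H x "-y"] sg_neg[of H y] by simp
lemma sg_nmul: "sg H \<Longrightarrow> x \<in> H \<Longrightarrow> nmul n x \<in> H"
  by (induction n) (auto simp: sg_0 sg_add)

definition cyc :: "'g::ab_group_add \<Rightarrow> 'g set" where
  "cyc h = range (\<lambda>n. nmul n h)"

definition splus :: "'g::ab_group_add set \<Rightarrow> 'g set \<Rightarrow> 'g set" where
  "splus A B = {a + b | a b. a \<in> A \<and> b \<in> B}"

lemma card_nmul:
  fixes x :: "'g::{ab_group_add,finite}"
  shows "nmul (card (UNIV :: 'g set)) x = 0"
proof -
  have "(\<Sum>y\<in>(UNIV::'g set). y + x) = (\<Sum>y\<in>UNIV. y)"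
    by (rule sum.reindex_bij_witness[of _ "\<lambda>y. y - x" "\<lambda>y. y + x"]) auto
  moreover have "(\<Sum>y\<in>(UNIV::'g set). y + x) = (\<Sum>y\<in>UNIV. y) + nmul (card (UNIV :: 'g set)) x"
    by (simp add: sum.distrib sum_const_nmul)
  ultimately show ?thesis by simp
qed

definition ord :: "'g::{ab_group_add,finite} \<Rightarrow> nat" where
  "ord x = (LEAST n. 0 < n \<and> nmul n x = 0)"

lemma ord_ex: "\<exists>n. 0 < n \<and> nmul n (x::'g::{ab_group_add,finite}) = 0"
  using card_nmul[of x] finite_UNIV_card_ge_0[where 'a='g] by auto

lemma ord_pos: "0 < ord x" and ord_nmul: "nmul (ord x) x = 0"
  using LeastI_ex[OF ord_ex[of x]] unfolding ord_def by auto

lemma ord_min: "0 < n \<Longrightarrow> nmul n x = 0 \<Longrightarrow> ord x \<le> n"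
  unfolding ord_def by (rule Least_le) auto

lemma nmul_mod: "nmul n x = nmul (n mod ord x) x"
proof -
  have "nmul n x = nmul (n div ord x * ord x + n mod ord x) x" by simp
  also have "\<dots> = nmul (n div ord x * ord x) x + nmul (n mod ord x) x"
    by (rule nmul_add)
  also have "nmul (n div ord x * ord x) x = 0"
    by (simp only: nmul_mult ord_nmul nmul_zero)
  also have "0 + nmul (n mod ord x) x = nmul (n mod ord x) x" by simp
  finally show ?thesis .
qed

lemma nmul_eq0_iff: "nmul n x = 0 \<longleftrightarrow> ord x dvd n"
proof
  assume h: "nmul n x = 0"
  show "ord x dvd n"
  proof (rule ccontr)
    assume "\<not> ord x dvd n"
    then have "0 < n mod ord x" by (simp add: mod_greater_zero_iff_not_dvd)
    moreover have "nmul (n mod ord x) x = 0" using h nmul_mod[of n x] by simp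
    ultimately have "ord x \<le> n mod ord x" by (rule ord_min)
    moreover have "n mod ord x < ord x" using ord_pos[of x] by simp
    ultimately show False by simp
  qed
next
  assume "ord x dvd n"
  then obtain k where "n = ord x * k" by (rule dvdE)
  then have "n = k * ord x" by simp
  then show "nmul n x = 0" by (simp add: nmul_mult ord_nmul)
qed

lemma ord_dvd_card:
  fixes x :: "'g::{ab_group_add,finite}"
  shows "ord x dvd card (UNIV :: 'g set)"
  using card_nmul[of x] nmul_eq0_iff by blast

lemma ord_pow:
  fixes x :: "'g::{ab_group_add,finite}"
  assumes "prime p" "card (UNIV :: 'g set) = p ^ k"
  shows "\<exists>e. ord x = p ^ e"
  using divides_primepow_nat[OF assms(1), of "ord x" k] ord_dvd_card[of x] assms(2) by auto

lemma ord_zero[simp]: "ord 0 = 1"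
proof -
  have "ord (0::'a) \<le> 1" by (rule ord_min) simp_all
  then show ?thesis using ord_pos[of "0::'a"] by linarith
qed

lemma ord_one_iff: "ord x = 1 \<longleftrightarrow> x = 0"
  using ord_nmul[of x] by auto

lemma neg_nmul: "- nmul a h = nmul (a * (ord h - 1)) h"
proof -
  have "h + nmul (ord h - 1) h = 0"
    using ord_nmul[of h] ord_pos[of h] nmul.simps(2)[of "ord h - 1" h] by simp
  then have "- h = nmul (ord h - 1) h" by (rule minus_unique)
  then show ?thesis by (simp add: nmul_neg[symmetric] nmul_mult)
qed

lemma sg_cyc: "sg (cyc (h::'g::{ab_group_add,finite}))"
  unfolding sg_def cyc_def
proof (intro conjI ballI)
  show "0 \<in> range (\<lambda>n. nmul n h)" by (rule range_eqI[of _ _ 0]) simp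
next
  fix x y assume "x \<in> range (\<lambda>n. nmul n h)" "y \<in> range (\<lambda>n. nmul n h)"
  then obtain a b where "x = nmul a h" "y = nmul b h" by auto
  then show "x + y \<in> range (\<lambda>n. nmul n h)" by (auto simp: nmul_add[symmetric])
next
  fix x assume "x \<in> range (\<lambda>n. nmul n h)"
  then obtain a where "x = nmul a h" by auto
  then show "- x \<in> range (\<lambda>n. nmul n h)" by (auto simp: neg_nmul)
qed

lemma in_cyc: "nmul n h \<in> cyc h" by (simp add: cyc_def)
lemma self_in_cyc: "h \<in> cyc h" using in_cyc[of 1 h] by simp

lemma sg_splus: "sg A \<Longrightarrow> sg B \<Longrightarrow> sg (splus A B)"
  unfolding sg_def splus_def
proof (intro conjI ballI)
  assume a: "0 \<in> A \<and> (\<forall>x\<in>A. \<forall>y\<in>A. x + y \<in> A) \<and> (\<forall>x\<in>A. - x \<in> A)"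
    and b: "0 \<in> B \<and> (\<forall>x\<in>B. \<forall>y\<in>B. x + y \<in> B) \<and> (\<forall>x\<in>B. - x \<in> B)"
  show "0 \<in> {a + b |a b. a \<in> A \<and> b \<in> B}" using a b by force
  fix x y assume "x \<in> {a + b |a b. a \<in> A \<and> b \<in> B}" "y \<in> {a + b |a b. a \<in> A \<and> b \<in> B}"
  then obtain a1 b1 a2 b2 where "x = a1 + b1" "y = a2 + b2" "a1 \<in> A" "a2 \<in> A" "b1 \<in> B" "b2 \<in> B" by auto
  then show "x + y \<in> {a + b |a b. a \<in> A \<and> b \<in> B}" using a b
    by (intro CollectI exI[of _ "a1 + a2"] exI[of _ "b1 + b2"]) (auto simp: algebra_simps)
next
  fix x
  assume a: "0 \<in> A \<and> (\<forall>x\<in>A. \<forall>y\<in>A. x + y \<in> A) \<and> (\<forall>x\<in>A. - x \<in> A)"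
    and b: "0 \<in> B \<and> (\<forall>x\<in>B. \<forall>y\<in>B. x + y \<in> B) \<and> (\<forall>x\<in>B. - x \<in> B)"
    and "x \<in> {a + b |a b. a \<in> A \<and> b \<in> B}"
  then obtain a1 b1 where "x = a1 + b1" "a1 \<in> A" "b1 \<in> B" by auto
  then show "- x \<in> {a + b |a b. a \<in> A \<and> b \<in> B}" using a b
    by (intro CollectI exI[of _ "- a1"] exI[of _ "- b1"]) (auto simp: algebra_simps)
qed

lemma inv_mod_p:
  fixes p r :: nat
  assumes "prime p" "0 < r" "r < p"
  shows "\<exists>s t. s * r = 1 + p * t"
proof -
  have "\<not> p dvd r" using assms dvd_imp_le[of p r] by auto
  then have "coprime p r" using assms(1) prime_imp_coprime by blast
  then have "coprime r p" by (simp add: coprime_commute)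
  then obtain s where "[r * s = Suc 0] (mod p)" using cong_solve_coprime_nat by blast
  then have "(r * s) mod p = 1" using assms prime_gt_1_nat[OF assms(1)] by (simp add: cong_def)
  moreover have "(r * s) mod p + p * (r * s div p) = r * s" by (rule mod_mult_div_eq)
  ultimately have "s * r = 1 + p * (r * s div p)" by (simp add: mult.commute)
  then show ?thesis by blast
qed


lemma chain_lemma:
  assumes "x0 \<notin> W" "nmul (p ^ e) x0 \<in> W"
  shows "\<exists>j. nmul (p ^ j) x0 \<notin> W \<and> nmul (p ^ Suc j) x0 \<in> W"
  using assms(2)
proof (induction e)
  case 0 then show ?case using assms(1) by simp
next
  case (Suc e)
  show ?case
  proof (cases "nmul (p ^ e) x0 \<in> W")
    case True then show ?thesis using Suc.IH by blast
  next
    case False then show ?thesis using Suc.prems by blast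
  qed
qed

lemma complement:
  fixes H Y :: "'g::{ab_group_add,finite} set"
  assumes p: "prime p" and H: "sg H" and hH: "h \<in> H" and oh: "ord h = p ^ f"
  shows "sg Y \<Longrightarrow> Y \<subseteq> H \<Longrightarrow> cyc h \<inter> Y \<subseteq> {0} \<Longrightarrow> (\<forall>z\<in>H. nmul (ord h) z \<in> Y) \<Longrightarrow>
    \<exists>K. sg K \<and> Y \<subseteq> K \<and> K \<subseteq> H \<and> cyc h \<inter> K \<subseteq> {0} \<and> H \<subseteq> splus (cyc h) K"
proof (induction "card H - card Y" arbitrary: Y rule: less_induct)
  case (less Y)
  note sgY = less.prems(1) and YH = less.prems(2) and capY = less.prems(3) and expY = less.prems(4)
  define W where "W = splus (cyc h) Y"
  show ?case
  proof (cases "H \<subseteq> W")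
    case True then show ?thesis using less.prems unfolding W_def by blast
  next
    case False
    then obtain x0 where x0H: "x0 \<in> H" and x0W: "x0 \<notin> W" by auto
    have YW: "Y \<subseteq> W"
    proof
      fix y assume "y \<in> Y"
      then show "y \<in> W" unfolding W_def splus_def using in_cyc[of 0 h] by force
    qed
    have "nmul (p ^ f) x0 \<in> W" using expY x0H oh YW by auto
    then obtain j where j1: "nmul (p ^ j) x0 \<notin> W" and j2: "nmul (p ^ Suc j) x0 \<in> W"
      using chain_lemma[OF x0W] by blast
    define x where "x = nmul (p ^ j) x0"
    have xH: "x \<in> H" using sg_nmul[OF H x0H] x_def by simp
    have xW: "x \<notin> W" using j1 x_def by simp
    have "nmul p x = nmul (p ^ Suc j) x0" unfolding x_def by (simp add: nmul_mult[symmetric] mult.commute)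
    with j2 obtain a y0 where a: "nmul p x = nmul a h + y0" and y0: "y0 \<in> Y"
      unfolding W_def splus_def cyc_def by auto
    have f0: "f \<noteq> 0"
    proof
      assume "f = 0"
      then have "ord h = 1" using oh by simp
      then have "x0 \<in> Y" using expY x0H by auto
      then show False using x0W YW by auto
    qed
    then obtain f' where f': "f = Suc f'" by (cases f) auto
    have "nmul (p ^ f) x \<in> Y" using expY xH oh by auto
    moreover have "nmul (p ^ f) x = nmul (p ^ f' * a) h + nmul (p ^ f') y0"
    proof -
      have "nmul (p ^ f) x = nmul (p ^ f' * p) x" using f' by (simp add: mult.commute)
      also have "\<dots> = nmul (p ^ f') (nmul p x)" by (rule nmul_mult)
      also have "\<dots> = nmul (p ^ f') (nmul a h) + nmul (p ^ f') y0" by (simp add: a nmul_distrib)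
      also have "nmul (p ^ f') (nmul a h) = nmul (p ^ f' * a) h" by (simp add: nmul_mult)
      finally show ?thesis .
    qed
    ultimately have "nmul (p ^ f' * a) h = nmul (p ^ f) x - nmul (p ^ f') y0"
      by (simp add: algebra_simps)
    also have "\<dots> \<in> Y" using sg_diff[OF sgY \<open>nmul (p ^ f) x \<in> Y\<close> sg_nmul[OF sgY y0]] .
    finally have "nmul (p ^ f' * a) h \<in> Y" .
    then have "nmul (p ^ f' * a) h = 0" using capY in_cyc[of "p ^ f' * a" h] by blast
    then have "p ^ f' * p dvd p ^ f' * a" using nmul_eq0_iff[of "p ^ f' * a" h] oh f'
      by (simp add: mult.commute)
    then have "p dvd a" using p by (simp add: prime_gt_0_nat)
    then obtain b where b: "a = p * b" by (auto elim: dvdE)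
    define x' where "x' = x - nmul b h"
    have x'H: "x' \<in> H" unfolding x'_def by (rule sg_diff[OF H xH sg_nmul[OF H hH]])
    have px': "nmul p x' = y0"
    proof -
      have "nmul p x' = nmul p x - nmul p (nmul b h)" unfolding x'_def by (rule nmul_diff)
      also have "nmul p (nmul b h) = nmul a h" by (simp add: b nmul_mult)
      finally show ?thesis using a by simp
    qed
    have x'W: "x' \<notin> W"
    proof
      assume "x' \<in> W"
      then obtain c y where "x' = nmul c h + y" "y \<in> Y" unfolding W_def splus_def cyc_def by auto
      then have "x = nmul (c + b) h + y" unfolding x'_def by (simp add: nmul_add algebra_simps)
      then have "x \<in> W" unfolding W_def splus_def using \<open>y \<in> Y\<close> in_cyc[of "c + b" h] by blast
      then show False using xW by simp
    qed
    define Y' where "Y' = splus Y (cyc x')"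
    have sgY': "sg Y'" unfolding Y'_def by (rule sg_splus[OF sgY sg_cyc])
    have YY': "Y \<subseteq> Y'"
    proof
      fix y assume "y \<in> Y"
      then show "y \<in> Y'" unfolding Y'_def splus_def using in_cyc[of 0 x'] by force
    qed
    have Y'H: "Y' \<subseteq> H"
    proof
      fix v assume "v \<in> Y'"
      then obtain y c where "v = y + nmul c x'" "y \<in> Y" unfolding Y'_def splus_def cyc_def by auto
      then show "v \<in> H" using YH sg_add[OF H _ sg_nmul[OF H x'H]] by auto
    qed
    have x'Y': "x' \<in> Y'" unfolding Y'_def splus_def
      using sg_0[OF sgY] in_cyc[of 1 x'] by force
    have x'Y: "x' \<notin> Y" using x'W YW by auto
    have fin: "finite Y'" by simp
    have card_lt: "card Y < card Y'"
      using YY' x'Y' x'Y by (intro psubset_card_mono[OF fin]) auto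
    have card_le: "card Y' \<le> card H" using Y'H by (intro card_mono) auto
    have cap': "cyc h \<inter> Y' \<subseteq> {0}"
    proof
      fix v assume v: "v \<in> cyc h \<inter> Y'"
      then obtain jj where vj: "v = nmul jj h" unfolding cyc_def by auto
      from v obtain y c where vy: "v = y + nmul c x'" and yY: "y \<in> Y"
        unfolding Y'_def splus_def cyc_def by auto
      define r where "r = c mod p"
      define d where "d = c div p"
      have "nmul c x' = nmul (d * p + r) x'" unfolding r_def d_def by simp
      also have "\<dots> = nmul d (nmul p x') + nmul r x'" by (simp add: nmul_add nmul_mult)
      finally have cx: "nmul c x' = nmul d y0 + nmul r x'" using px' by simp
      define y'' where "y'' = y + nmul d y0"
      have y''Y: "y'' \<in> Y" unfolding y''_def by (rule sg_add[OF sgY yY sg_nmul[OF sgY y0]])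
      have vv: "v = y'' + nmul r x'" using vy cx unfolding y''_def by (simp add: algebra_simps)
      show "v \<in> {0}"
      proof (cases "r = 0")
        case True
        then have "v \<in> Y" using vv y''Y by simp
        then show ?thesis using v capY by auto
      next
        case False
        have "r < p" unfolding r_def using prime_gt_0_nat[OF p] by simp
        then obtain s t where st: "s * r = 1 + p * t" using inv_mod_p[OF p] False by blast
        have "nmul s v = nmul s y'' + nmul (s * r) x'" using vv by (simp add: nmul_distrib nmul_mult)
        also have "nmul (s * r) x' = x' + nmul t y0"
        proof -
          have "nmul (s * r) x' = nmul 1 x' + nmul (t * p) x'" unfolding st by (simp add: nmul_add mult.commute)
          also have "\<dots> = x' + nmul t y0" by (simp add: nmul_mult px')
          finally show ?thesis .
        qed
        finally have e1: "nmul s v = x' + nmul s y'' + nmul t y0" by (simp add: add.assoc)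
        have "nmul (s * jj) h = nmul s v" unfolding vj by (rule nmul_mult)
        then have "x' = nmul (s * jj) h + - (nmul s y'' + nmul t y0)"
          using e1 by (simp add: algebra_simps)
        moreover have "- (nmul s y'' + nmul t y0) \<in> Y"
          by (intro sg_neg[OF sgY] sg_add[OF sgY] sg_nmul[OF sgY] y''Y y0)
        ultimately have "x' \<in> W" unfolding W_def splus_def using in_cyc[of "s * jj" h] by blast
        then show ?thesis using x'W by simp
      qed
    qed
    have expY': "\<forall>z\<in>H. nmul (ord h) z \<in> Y'" using expY YY' by auto
    have "card H - card Y' < card H - card Y" using card_lt card_le by simp
    from less.hyps[OF this sgY' Y'H cap' expY'] obtain K where
      "sg K" "Y' \<subseteq> K" "K \<subseteq> H" "cyc h \<inter> K \<subseteq> {0}" "H \<subseteq> splus (cyc h) K" by blast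
    then show ?thesis using YY' by blast
  qed
qed


definition Pl :: "'g::{ab_group_add,finite} list \<Rightarrow> 'g gr" where
  "Pl xs = prod_list (map (\<lambda>g. 1 - mon g) xs)"

lemma Pl_Nil[simp]: "Pl [] = 1" and Pl_Cons[simp]: "Pl (g # xs) = (1 - mon g) * Pl xs"
  by (simp_all add: Pl_def)

lemma expand:
  fixes h :: "'g::{ab_group_add,finite}"
  assumes pzq: "pz p ((1 - mon h) ^ q)"
    and dec: "\<forall>g\<in>H. \<exists>j k. k \<in> K \<and> g = nmul j h + k"
    and VK: "\<forall>ks. set ks \<subseteq> K \<longrightarrow> MK \<le> length ks \<longrightarrow> pz p (Pl ks)"
  shows "set gs \<subseteq> H \<Longrightarrow> set ks \<subseteq> K \<Longrightarrow> q + MK \<le> a + length gs + length ks + 1 \<Longrightarrow>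
    pz p (r * (1 - mon h) ^ a * Pl ks * Pl gs)"
proof (induction gs arbitrary: a ks r)
  case Nil
  show ?case
  proof (cases "q \<le> a")
    case True
    then have "(1 - mon h) ^ a = (1 - mon h) ^ q * (1 - mon h) ^ (a - q)"
      by (simp add: power_add[symmetric])
    then have "r * (1 - mon h) ^ a * Pl ks * Pl [] = (1 - mon h) ^ q * (r * (1 - mon h) ^ (a - q) * Pl ks)"
      by (simp add: algebra_simps)
    then show ?thesis using pz_multL[OF pzq] by simp
  next
    case False
    then have "MK \<le> length ks" using Nil.prems by simp
    then have "pz p (Pl ks)" using VK Nil.prems by blast
    moreover have "r * (1 - mon h) ^ a * Pl ks * Pl [] = Pl ks * (r * (1 - mon h) ^ a)"
      by (simp add: algebra_simps)
    ultimately show ?thesis using pz_multR[of p "Pl ks" "r * (1 - mon h) ^ a"] by simp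
  qed
next
  case (Cons g gs)
  from Cons.prems(1) dec obtain j k where kK: "k \<in> K" and g: "g = nmul j h + k" by auto
  obtain u where u: "1 - mon (nmul j h) = (1 - mon h) * u" using geom by blast
  have "1 - mon g = (1 - mon (nmul j h)) + mon (nmul j h) * (1 - mon k)"
    using g by (simp add: mon_mult[symmetric] algebra_simps)
  then have mg: "1 - mon g = (1 - mon h) * u + mon (nmul j h) * (1 - mon k)" using u by simp
  have eq: "r * (1 - mon h) ^ a * Pl ks * Pl (g # gs) =
      (r * u) * (1 - mon h) ^ Suc a * Pl ks * Pl gs + (r * mon (nmul j h)) * (1 - mon h) ^ a * Pl (k # ks) * Pl gs"
    by (simp add: mg algebra_simps)
  have i1: "pz p ((r * u) * (1 - mon h) ^ Suc a * Pl ks * Pl gs)"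
    using Cons.prems by (intro Cons.IH) auto
  have i2: "pz p ((r * mon (nmul j h)) * (1 - mon h) ^ a * Pl (k # ks) * Pl gs)"
    using Cons.prems kK by (intro Cons.IH) auto
  show ?case by (subst eq) (rule pz_add[OF i1 i2])
qed

lemma sum_mset_replicate_nmul: "sum_mset (replicate_mset n a) = nmul n a"
  by (induction n) auto

lemma sum_mset_sg: "sg K \<Longrightarrow> set_mset S \<subseteq> K \<Longrightarrow> sum_mset S \<in> K"
  by (induction S) (auto simp: sg_0 sg_add)

lemma zsf_extend:
  fixes h :: "'g::{ab_group_add,finite}"
  assumes sgK: "sg K" and capK: "cyc h \<inter> K \<subseteq> {0}" and hK: "h \<notin> K"
    and TK: "set_mset TK \<subseteq> K" and zsf: "zero_sumfree TK"
  shows "zero_sumfree (TK + replicate_mset (ord h - 1) h)"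
  unfolding zero_sumfree_def
proof (intro allI impI notI)
  fix S' assume S': "S' \<subseteq># TK + replicate_mset (ord h - 1) h \<and> S' \<noteq> {#}" and sum0: "sum_mset S' = 0"
  define c where "c = count S' h"
  define S1 where "S1 = filter_mset (\<lambda>x. x \<noteq> h) S'"
  have "S' = S1 + filter_mset (\<lambda>x. \<not> x \<noteq> h) S'" unfolding S1_def by (rule multiset_partition)
  also have "filter_mset (\<lambda>x. \<not> x \<noteq> h) S' = replicate_mset c h"
    unfolding c_def by (simp add: filter_eq_replicate_mset)
  finally have split: "S' = S1 + replicate_mset c h" .
  have "h \<notin># TK" using TK hK by blast
  then have hTK: "count TK h = 0" by (simp add: not_in_iff)
  have "S' \<subseteq># TK + replicate_mset (ord h - 1) h" using S' by simp
  then have "c \<le> count (TK + replicate_mset (ord h - 1) h) h"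
    unfolding c_def by (rule mset_subset_eq_count)
  then have c_lt: "c < ord h" using hTK ord_pos[of h] by simp
  have "S1 \<subseteq># filter_mset (\<lambda>x. x \<noteq> h) (TK + replicate_mset (ord h - 1) h)"
    unfolding S1_def by (rule multiset_filter_mono[OF \<open>S' \<subseteq># TK + replicate_mset (ord h - 1) h\<close>])
  also have "filter_mset (\<lambda>x. x \<noteq> h) (TK + replicate_mset (ord h - 1) h) = TK"
  proof -
    have "filter_mset (\<lambda>x. x \<noteq> h) TK = filter_mset (\<lambda>x. True) TK"
    proof (rule filter_mset_cong0)
      fix x assume "x \<in># TK"
      then have "x \<in> K" using TK by blast
      then show "x \<noteq> h \<longleftrightarrow> True" using hK by blast
    qed
    then show ?thesis by simp
  qed
  finally have S1TK: "S1 \<subseteq># TK" .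
  have "set_mset S1 \<subseteq> set_mset TK" by (rule set_mset_mono[OF S1TK])
  then have "sum_mset S1 \<in> K" using sum_mset_sg[OF sgK] TK by blast
  have sum_split: "sum_mset S1 + nmul c h = 0" using sum0 split by (simp add: sum_mset_replicate_nmul)
  then have "nmul c h = - sum_mset S1" by (simp add: eq_neg_iff_add_eq_0 add.commute)
  then have "nmul c h \<in> K" using sg_neg[OF sgK \<open>sum_mset S1 \<in> K\<close>] by simp
  then have "nmul c h = 0" using capK in_cyc[of c h] by blast
  then have "ord h dvd c" by (simp add: nmul_eq0_iff)
  then have c0: "c = 0" using c_lt dvd_imp_le[of "ord h" c] by (cases "c = 0") auto
  then have "sum_mset S1 = 0" using sum_split by simp
  then have "\<not> (S1 \<subseteq># TK \<and> S1 \<noteq> {#})" using zsf unfolding zero_sumfree_def by auto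
  then have "S1 = {#}" using S1TK by simp
  then have "S' = {#}" using split c0 by simp
  then show False using S' by simp
qed

lemma main:
  fixes H :: "'g::{ab_group_add,finite} set"
  assumes p: "prime p" and cardG: "card (UNIV::'g set) = p ^ kk"
  shows "sg H \<Longrightarrow> \<exists>M\<ge>1. (\<forall>gs. set gs \<subseteq> H \<longrightarrow> M \<le> length gs \<longrightarrow> pz p (Pl gs)) \<and>
           (\<exists>T. set_mset T \<subseteq> H \<and> size T = M - 1 \<and> zero_sumfree T)"
proof (induction "card H" arbitrary: H rule: less_induct)
  case (less H)
  show ?case
  proof (cases "H \<subseteq> {0}")
    case True
    have V: "\<forall>gs. set gs \<subseteq> H \<longrightarrow> 1 \<le> length gs \<longrightarrow> pz p (Pl gs)"
    proof (intro allI impI)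
      fix gs :: "'g list" assume a: "set gs \<subseteq> H" "1 \<le> length gs"
      then obtain g gs' where gs: "gs = g # gs'" by (cases gs) auto
      then have "g = 0" using a True by auto
      then show "pz p (Pl gs)" using gs by simp
    qed
    have Z: "zero_sumfree ({#}::'g multiset)" unfolding zero_sumfree_def by auto
    have "\<exists>T. set_mset T \<subseteq> H \<and> size T = 1 - 1 \<and> zero_sumfree (T::'g multiset)"
      by (rule exI[of _ "{#}"]) (simp add: Z)
    then show ?thesis using V by blast
  next
    case False
    then obtain z0 where z0H: "z0 \<in> H" and z0: "z0 \<noteq> 0" by auto
    have finH: "finite H" by simp
    have "ord ` H \<noteq> {}" using z0H by blast
    then have "Max (ord ` H) \<in> ord ` H" using finH by (intro Max_in) simp_all
    then obtain h where hH: "h \<in> H" and hmax': "Max (ord ` H) = ord h" by (rule imageE) simp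
    note hmax = hmax'[symmetric]
    have maxo: "\<forall>z\<in>H. ord z \<le> ord h" unfolding hmax using finH by (intro ballI Max_ge) simp_all
    obtain f where oh: "ord h = p ^ f" using ord_pow[OF p cardG] by blast
    have expo: "\<forall>z\<in>H. nmul (ord h) z \<in> {0}"
    proof
      fix z assume "z \<in> H"
      obtain e where oz: "ord z = p ^ e" using ord_pow[OF p cardG] by blast
      have "ord z \<le> ord h" using maxo \<open>z \<in> H\<close> by blast
      then have "p ^ e \<le> p ^ f" using oz oh by simp
      then have "e \<le> f" by (rule power_le_imp_le_exp[OF prime_gt_1_nat[OF p]])
      then have "ord z dvd ord h" using le_imp_power_dvd[of e f p] oz oh by simp
      then show "nmul (ord h) z \<in> {0}" by (simp add: nmul_eq0_iff)
    qed
    have sg0: "sg ({0}::'g set)" by (simp add: sg_def)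
    have cap0: "cyc h \<inter> {0} \<subseteq> {0}" by auto
    obtain K where sgK: "sg K" and KH: "K \<subseteq> H" and capK: "cyc h \<inter> K \<subseteq> {0}"
      and HK: "H \<subseteq> splus (cyc h) K"
    proof -
      have "{0} \<subseteq> H" using sg_0[OF less.prems] by simp
      from complement[OF p less.prems hH oh sg0 this cap0 expo] show ?thesis using that by blast
    qed
    have "ord z0 \<noteq> 1" using z0 ord_one_iff by blast
    then have "2 \<le> ord z0" using ord_pos[of z0] by linarith
    moreover have "ord z0 \<le> ord h" using maxo z0H by blast
    ultimately have q2: "2 \<le> ord h" by linarith
    then have "h \<noteq> 0" by auto
    then have hK: "h \<notin> K" using capK self_in_cyc[of h] by auto
    have "card K < card H" using KH hK hH by (intro psubset_card_mono) auto
    from less.hyps[OF this sgK] obtain MK where MK1: "MK \<ge> 1"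
      and VK: "\<forall>gs. set gs \<subseteq> K \<longrightarrow> MK \<le> length gs \<longrightarrow> pz p (Pl gs)"
      and ZK: "\<exists>T. set_mset T \<subseteq> K \<and> size T = MK - 1 \<and> zero_sumfree T" by blast
    obtain TK where TK: "set_mset TK \<subseteq> K" "size TK = MK - 1" "zero_sumfree TK" using ZK by blast
    have pzq: "pz p ((1 - mon h) ^ ord h)"
    proof -
      have "pz p ((1 - mon h) ^ (p ^ f) - (1 - mon (nmul (p ^ f) h)))" by (rule frob[OF p])
      moreover have "nmul (p ^ f) h = 0" using ord_nmul[of h] oh by simp
      ultimately show ?thesis using oh by simp
    qed
    have dec: "\<forall>g\<in>H. \<exists>j k. k \<in> K \<and> g = nmul j h + k"
    proof
      fix g assume "g \<in> H"
      then have "g \<in> splus (cyc h) K" using HK by blast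
      then obtain a k where "g = a + k" "a \<in> cyc h" "k \<in> K" unfolding splus_def by blast
      moreover then obtain j where "a = nmul j h" unfolding cyc_def by blast
      ultimately show "\<exists>j k. k \<in> K \<and> g = nmul j h + k" by blast
    qed
    define M where "M = MK + ord h - 1"
    have V: "\<forall>gs. set gs \<subseteq> H \<longrightarrow> M \<le> length gs \<longrightarrow> pz p (Pl gs)"
    proof (intro allI impI)
      fix gs :: "'g list" assume a: "set gs \<subseteq> H" "M \<le> length gs"
      have "pz p (1 * (1 - mon h) ^ 0 * Pl [] * Pl gs)"
        using a q2 unfolding M_def by (intro expand[OF pzq dec VK]) auto
      then show "pz p (Pl gs)" by simp
    qed
    have Z1: "set_mset (TK + replicate_mset (ord h - 1) h) \<subseteq> H"
      using TK(1) KH hH by auto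
    have Z2: "size (TK + replicate_mset (ord h - 1) h) = M - 1"
      using TK(2) MK1 q2 unfolding M_def by simp
    have Z3: "zero_sumfree (TK + replicate_mset (ord h - 1) h)"
      by (rule zsf_extend[OF sgK capK hK TK(1) TK(3)])
    have M1: "M \<ge> 1" using MK1 q2 unfolding M_def by simp
    show ?thesis using V Z1 Z2 Z3 M1 by blast
  qed
qed


lemma coef_sum: "finite A \<Longrightarrow> coef (sum g A) x = (\<Sum>a\<in>A. coef (g a) x)"
  by (induction A rule: finite_induct) auto

lemma coef_negpow: "coef ((-1) ^ n * a) x = (-1) ^ n * coef a x"
  by (cases "even n") auto

lemma prod_mon: "finite X \<Longrightarrow> (\<Prod>a\<in>X. mon (f a)) = mon (sum f X)"
  by (induction X rule: finite_induct) (auto simp: mon_mult)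

lemma coef_prod:
  fixes f :: "'i \<Rightarrow> 'g::{ab_group_add,finite}"
  assumes "finite A"
  shows "coef (\<Prod>a\<in>A. 1 - mon (f a)) x = (\<Sum>T\<in>Pow A. (-1) ^ card T * (if sum f T = x then 1 else 0))"
proof -
  have "(\<Prod>a\<in>A. 1 - mon (f a)) = (\<Prod>a\<in>A. - mon (f a) + 1)" by simp
  also have "\<dots> = (\<Sum>X\<in>Pow A. (\<Prod>a\<in>X. - mon (f a)) * (\<Prod>a\<in>A - X. 1))"
    by (rule prod_add[OF assms])
  also have "\<dots> = (\<Sum>X\<in>Pow A. (-1) ^ card X * mon (sum f X))"
  proof (rule sum.cong[OF refl])
    fix X assume "X \<in> Pow A"
    then have "finite X" using assms finite_subset by auto
    then show "(\<Prod>a\<in>X. - mon (f a)) * (\<Prod>a\<in>A - X. 1) = (-1) ^ card X * mon (sum f X)"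
      by (simp add: prod_uminus prod_mon)
  qed
  finally have "coef (\<Prod>a\<in>A. 1 - mon (f a)) x = (\<Sum>X\<in>Pow A. coef ((-1) ^ card X * mon (sum f X)) x)"
    using assms by (simp only: coef_sum finite_Pow_iff)
  also have "\<dots> = (\<Sum>T\<in>Pow A. (-1) ^ card T * (if sum f T = x then 1 else 0))"
    by (rule sum.cong[OF refl]) (simp only: coef_negpow coef_mon eq_commute)
  finally show ?thesis .
qed

lemma mset_nth_sub:
  assumes "T \<subseteq> {..<length xs}"
  shows "image_mset (nth xs) (mset_set T) \<subseteq># mset xs"
proof -
  have fin: "finite {..<length xs}" by simp
  have "mset xs = mset (map (nth xs) [0..<length xs])" by (simp add: map_nth)
  also have "\<dots> = image_mset (nth xs) (mset_set {..<length xs})" by (simp add: lessThan_atLeast0)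
  also have "mset_set {..<length xs} = mset_set T + mset_set ({..<length xs} - T)"
    using assms finite_subset[OF assms fin] by (subst mset_set_Union[symmetric]) (auto simp: Un_absorb1)
  finally show ?thesis by simp
qed

lemma alt_sum:
  assumes fI: "finite I" and T: "E \<subseteq> T" "T \<subseteq> I"
  shows "(\<Sum>J\<in>Pow I. if E \<subseteq> J \<and> J \<subseteq> T then (-1::int) ^ card J else 0) = (if T = E then (-1) ^ card E else 0)"
proof -
  have fT: "finite T" using T fI finite_subset by blast
  have "(\<Sum>J\<in>Pow I. if E \<subseteq> J \<and> J \<subseteq> T then (-1::int) ^ card J else 0) =
        (\<Sum>J\<in>{J\<in>Pow I. E \<subseteq> J \<and> J \<subseteq> T}. (-1) ^ card J)"
    by (rule sum.inter_filter[symmetric]) (simp add: fI)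
  also have "{J\<in>Pow I. E \<subseteq> J \<and> J \<subseteq> T} = {J. J \<subseteq> T \<and> E \<subseteq> J}" using T by auto
  finally have eq: "(\<Sum>J\<in>Pow I. if E \<subseteq> J \<and> J \<subseteq> T then (-1::int) ^ card J else 0) =
        (\<Sum>J\<in>{J. J \<subseteq> T \<and> E \<subseteq> J}. (-1) ^ card J)" .
  show ?thesis
  proof (cases "T = E")
    case True
    then have "{J. J \<subseteq> T \<and> E \<subseteq> J} = {E}" by auto
    then show ?thesis using eq True by simp
  next
    case False
    then have "E \<subset> T" using T by auto
    have c: "card {T'. T' \<subseteq> T \<and> E \<subseteq> T' \<and> even (card T')} = card {T'. T' \<subseteq> T \<and> E \<subseteq> T' \<and> odd (card T')}"
      by (rule card_subsupersets_even_odd[OF fT \<open>E \<subset> T\<close>])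
    have "(\<Sum>J\<in>{J. J \<subseteq> T \<and> E \<subseteq> J}. (-1::int) ^ card J) = 0"
    proof (rule sum_alternating_cancels)
      show "finite {J. J \<subseteq> T \<and> E \<subseteq> J}" using fT by simp
      have "{x. x \<in> {J. J \<subseteq> T \<and> E \<subseteq> J} \<and> even (card x)} = {T'. T' \<subseteq> T \<and> E \<subseteq> T' \<and> even (card T')}" by auto
      moreover have "{x. x \<in> {J. J \<subseteq> T \<and> E \<subseteq> J} \<and> odd (card x)} = {T'. T' \<subseteq> T \<and> E \<subseteq> T' \<and> odd (card T')}" by auto
      ultimately show "card {x. x \<in> {J. J \<subseteq> T \<and> E \<subseteq> J} \<and> even (card x)} =
          card {x. x \<in> {J. J \<subseteq> T \<and> E \<subseteq> J} \<and> odd (card x)}" using c by simp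
    qed
    then show ?thesis using eq False by simp
  qed
qed

lemma negsq: "(-1::int) ^ k * (-1) ^ k = 1"
  by (induction k) auto

lemma counting:
  fixes f :: "nat \<Rightarrow> 'g::{ab_group_add,finite}" and p n m D M :: nat
  assumes p: "prime p" and m1: "1 \<le> m" and mp: "m < p" and nD: "n = D + m - 1" and MD: "M \<le> D"
    and olson: "\<forall>(A::nat set) (g::nat \<Rightarrow> 'g). finite A \<longrightarrow> M \<le> card A \<longrightarrow>
      (\<forall>x. int p dvd (\<Sum>T\<in>Pow A. (-1) ^ card T * (if sum g T = x then 1 else 0)))"
    and F1: "\<forall>T. T \<subseteq> {..<n} \<longrightarrow> sum f T = 0 \<longrightarrow> card T \<le> m"
    and F2: "\<forall>e<n. f e \<noteq> 0"
  shows False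
proof -
  define I where "I = {..<n}"
  have fI: "finite I" by (simp add: I_def)
  define a where "a J = (\<Sum>T\<in>Pow I. if J \<subseteq> T \<and> sum f T = 0 then (-1::int) ^ card T else 0)" for J
  have F3: "int p dvd a J" if J: "J \<subseteq> I" "card J < m" for J
  proof -
    have fJ: "finite J" using J fI finite_subset by blast
    have "card (I - J) = n - card J" using J fJ by (simp add: card_Diff_subset I_def)
    then have cM: "M \<le> card (I - J)" using J MD nD by simp
    define c where "c = (\<Sum>T\<in>Pow (I - J). (-1) ^ card T * (if sum f T = - sum f J then 1 else (0::int)))"
    have "finite (I - J)" using fI by simp
    from olson[rule_format, OF this cM, of f "- sum f J"] have dc: "int p dvd c" unfolding c_def .
    define G where "G T = (if sum f T = 0 then (-1::int) ^ card T else 0)" for T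
    have "a J = (\<Sum>T\<in>Pow I. if J \<subseteq> T then G T else 0)"
      unfolding a_def G_def by (rule sum.cong) auto
    also have "\<dots> = (\<Sum>T\<in>{T\<in>Pow I. J \<subseteq> T}. G T)"
      by (rule sum.inter_filter[symmetric]) (simp add: fI)
    also have "\<dots> = (\<Sum>T'\<in>Pow (I - J). G (J \<union> T'))"
    proof (rule sum.reindex_bij_witness[of _ "\<lambda>T'. J \<union> T'" "\<lambda>T. T - J"])
      fix T assume "T \<in> {T \<in> Pow I. J \<subseteq> T}"
      then have eqT: "J \<union> (T - J) = T" by auto
      then show "J \<union> (T - J) = T" .
      show "G (J \<union> (T - J)) = G T" using eqT by (rule arg_cong)
      show "T - J \<in> Pow (I - J)" using \<open>T \<in> {T \<in> Pow I. J \<subseteq> T}\<close> by auto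
    next
      fix T' assume "T' \<in> Pow (I - J)"
      then show "J \<union> T' - J = T'" and "J \<union> T' \<in> {T \<in> Pow I. J \<subseteq> T}" using J by auto
    qed
    also have "\<dots> = (\<Sum>T'\<in>Pow (I - J). (-1) ^ card J * ((-1) ^ card T' * (if sum f T' = - sum f J then 1 else 0)))"
    proof (rule sum.cong[OF refl])
      fix T' assume "T' \<in> Pow (I - J)"
      then have T': "T' \<subseteq> I - J" by simp
      have fT': "finite T'" using T' fI finite_subset by blast
      have dis: "J \<inter> T' = {}" using T' by auto
      have "card (J \<union> T') = card J + card T'" using fJ fT' dis by (rule card_Un_disjoint)
      moreover have "sum f (J \<union> T') = sum f J + sum f T'" using fJ fT' dis by (rule sum.union_disjoint)
      moreover have "(sum f J + sum f T' = 0) = (sum f T' = - sum f J)"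
        using neg_eq_iff_add_eq_0[of "sum f J" "sum f T'"] by auto
      ultimately show "G (J \<union> T') = (-1) ^ card J * ((-1) ^ card T' * (if sum f T' = - sum f J then 1 else 0))"
        unfolding G_def by (simp add: power_add)
    qed
    also have "\<dots> = (-1) ^ card J * c" unfolding c_def by (simp add: sum_distrib_left)
    finally show ?thesis using dc by simp
  qed
  define Nc where "Nc E = (\<Sum>T\<in>Pow I. if E \<subseteq> T \<and> card T = m \<and> sum f T = 0 then 1 else (0::int))" for E
  have F4: "int p dvd ((if sum f E = 0 then 1 else 0) - Nc E)" if E: "E \<subseteq> I" "card E < m" for E
  proof -
    define H where "H J T = (if E \<subseteq> J \<and> card J < m \<and> J \<subseteq> T \<and> sum f T = 0 then (-1::int) ^ card J * (-1) ^ card T else 0)" for J T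
    define X where "X = (\<Sum>J\<in>Pow I. if E \<subseteq> J \<and> card J < m then (-1) ^ card J * a J else 0)"
    have dX: "int p dvd X" unfolding X_def
    proof (rule dvd_sum)
      fix J assume "J \<in> Pow I"
      then show "int p dvd (if E \<subseteq> J \<and> card J < m then (-1) ^ card J * a J else 0)"
        using F3[of J] by (cases "E \<subseteq> J \<and> card J < m") (auto intro: dvd_mult)
    qed
    have X1: "X = (\<Sum>J\<in>Pow I. \<Sum>T\<in>Pow I. H J T)"
      unfolding X_def
    proof (rule sum.cong[OF refl])
      fix J assume "J \<in> Pow I"
      show "(if E \<subseteq> J \<and> card J < m then (-1) ^ card J * a J else 0) = (\<Sum>T\<in>Pow I. H J T)"
      proof (cases "E \<subseteq> J \<and> card J < m")
        case True
        then have "(if E \<subseteq> J \<and> card J < m then (-1) ^ card J * a J else 0) = (-1) ^ card J * a J" by simp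
        also have "\<dots> = (\<Sum>T\<in>Pow I. H J T)"
          unfolding a_def H_def sum_distrib_left using True by (intro sum.cong) auto
        finally show ?thesis .
      next
        case False
        then have h0: "\<forall>T\<in>Pow I. H J T = 0" unfolding H_def by auto
        show ?thesis using False sum.neutral[OF h0] by auto
      qed
    qed
    have X2: "X = (\<Sum>T\<in>Pow I. \<Sum>J\<in>Pow I. H J T)" unfolding X1 by (rule sum.swap)
    have X3: "(\<Sum>J\<in>Pow I. H J T) = (if T = E \<and> sum f E = 0 then 1 else 0) -
        (if E \<subseteq> T \<and> card T = m \<and> sum f T = 0 then 1 else 0)" if TI: "T \<in> Pow I" for T
    proof (cases "E \<subseteq> T \<and> sum f T = 0")
      case False
      then have "\<forall>J\<in>Pow I. H J T = 0" unfolding H_def by auto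
      then have "(\<Sum>J\<in>Pow I. H J T) = 0" by (rule sum.neutral)
      moreover from False have "\<not> (T = E \<and> sum f E = 0)" by auto
      ultimately show ?thesis using False by simp
    next
      case True
      then have ET: "E \<subseteq> T" and zT: "sum f T = 0" by auto
      have TI': "T \<subseteq> I" using TI by simp
      have fT: "finite T" using TI' fI finite_subset by blast
      have cT: "card T \<le> m" using F1 TI' zT unfolding I_def by blast
      define \<beta> where "\<beta> = (\<Sum>J\<in>Pow I. if E \<subseteq> J \<and> J \<subseteq> T \<and> card J < m then (-1::int) ^ card J else 0)"
      have Hs: "(\<Sum>J\<in>Pow I. H J T) = (-1) ^ card T * \<beta>"
        unfolding \<beta>_def H_def sum_distrib_left using zT by (intro sum.cong) (auto simp: mult.commute)
      have \<gamma>: "(\<Sum>J\<in>Pow I. if E \<subseteq> J \<and> J \<subseteq> T then (-1::int) ^ card J else 0) = (if T = E then (-1) ^ card E else 0)"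
        by (rule alt_sum[OF fI ET TI'])
      show ?thesis
      proof (cases "card T < m")
        case True
        have "\<beta> = (\<Sum>J\<in>Pow I. if E \<subseteq> J \<and> J \<subseteq> T then (-1::int) ^ card J else 0)"
          unfolding \<beta>_def
        proof (rule sum.cong[OF refl])
          fix J assume "J \<in> Pow I"
          show "(if E \<subseteq> J \<and> J \<subseteq> T \<and> card J < m then (-1::int) ^ card J else 0) =
              (if E \<subseteq> J \<and> J \<subseteq> T then (-1) ^ card J else 0)"
            using card_mono[OF fT, of J] True by auto
        qed
        then have "\<beta> = (if T = E then (-1) ^ card E else 0)" using \<gamma> by simp
        then show ?thesis using Hs True zT by (auto simp: negsq)
      next
        case False
        then have cTm: "card T = m" using cT by simp
        have TE: "T \<noteq> E" using cTm E(2) by auto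
        have split: "(\<Sum>J\<in>Pow I. if E \<subseteq> J \<and> J \<subseteq> T then (-1::int) ^ card J else 0) =
            \<beta> + (\<Sum>J\<in>Pow I. if J = T then (-1) ^ card J else 0)"
          unfolding \<beta>_def sum.distrib[symmetric]
        proof (rule sum.cong[OF refl])
          fix J assume "J \<in> Pow I"
          show "(if E \<subseteq> J \<and> J \<subseteq> T then (-1::int) ^ card J else 0) =
            (if E \<subseteq> J \<and> J \<subseteq> T \<and> card J < m then (-1) ^ card J else 0) + (if J = T then (-1) ^ card J else 0)"
          proof (cases "J = T")
            case True then show ?thesis using ET cTm by simp
          next
            case False
            show ?thesis
            proof (cases "E \<subseteq> J \<and> J \<subseteq> T")
              case True
              then have "J \<subset> T" using False by auto
              then have "card J < card T" using fT by (intro psubset_card_mono)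
              then show ?thesis using True False cTm by simp
            next
              case False2: False
              then show ?thesis using False by auto
            qed
          qed
        qed
        have "(\<Sum>J\<in>Pow I. if J = T then (-1::int) ^ card J else 0) = (-1) ^ card T"
          using TI fI by (simp add: sum.delta)
        then have "\<beta> = - ((-1) ^ card T)" using split \<gamma> TE by simp
        then show ?thesis using Hs TE cTm zT ET by (simp add: negsq)
      qed
    qed
    have "X = (\<Sum>T\<in>Pow I. (if T = E \<and> sum f E = 0 then 1 else 0) -
        (if E \<subseteq> T \<and> card T = m \<and> sum f T = 0 then 1 else (0::int)))"
      unfolding X2 by (rule sum.cong[OF refl]) (rule X3)
    also have "\<dots> = (\<Sum>T\<in>Pow I. if T = E \<and> sum f E = 0 then 1 else (0::int)) - Nc E"
      unfolding Nc_def by (simp add: sum_subtractf)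
    also have "(\<Sum>T\<in>Pow I. if T = E \<and> sum f E = 0 then 1 else (0::int)) = (if sum f E = 0 then 1 else 0)"
    proof -
      have "(\<Sum>T\<in>Pow I. if T = E \<and> sum f E = 0 then 1 else (0::int)) =
          (\<Sum>T\<in>Pow I. if T = E then (if sum f E = 0 then 1 else 0) else 0)" by (rule sum.cong) auto
      also have "\<dots> = (if sum f E = 0 then 1 else 0)" using E(1) fI by (simp add: sum.delta)
      finally show ?thesis .
    qed
    finally show ?thesis using dX by simp
  qed
  have fin0: "sum f {} = 0" by simp
  have N0: "int p dvd (1 - Nc {})" using F4[of "{}"] m1 by simp
  show False
  proof (cases "m = 1")
    case True
    have "Nc {} = 0" unfolding Nc_def
    proof (rule sum.neutral, rule ballI)
      fix T assume "T \<in> Pow I"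
      show "(if {} \<subseteq> T \<and> card T = m \<and> sum f T = 0 then 1 else (0::int)) = 0"
      proof (cases "card T = 1")
        case True
        then obtain e where "T = {e}" by (rule card_1_singletonE)
        then show ?thesis using F2 \<open>T \<in> Pow I\<close> by (auto simp: I_def)
      qed (use \<open>m = 1\<close> in auto)
    qed
    then have "int p dvd 1" using N0 by simp
    then show False using p by (simp add: prime_gt_1_nat)  
  next
    case False
    then have m2: "2 \<le> m" using m1 by simp
    have Ne: "int p dvd Nc {e}" if "e \<in> I" for e
    proof -
      have "f e \<noteq> 0" using F2 that by (simp add: I_def)
      then show ?thesis using F4[of "{e}"] that m2 by simp
    qed
    have "int p dvd (\<Sum>e\<in>I. Nc {e})" by (rule dvd_sum) (use Ne in blast)
    moreover have "(\<Sum>e\<in>I. Nc {e}) = int m * Nc {}"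
    proof -
      have "(\<Sum>e\<in>I. Nc {e}) = (\<Sum>T\<in>Pow I. \<Sum>e\<in>I. if e \<in> T \<and> card T = m \<and> sum f T = 0 then 1 else (0::int))"
        unfolding Nc_def by (subst sum.swap) simp
      also have "\<dots> = (\<Sum>T\<in>Pow I. int m * (if card T = m \<and> sum f T = 0 then 1 else 0))"
      proof (rule sum.cong[OF refl])
        fix T assume "T \<in> Pow I"
        then have TI: "T \<subseteq> I" by simp
        have "(\<Sum>e\<in>I. if e \<in> T then 1 else (0::int)) = int (card {e\<in>I. e \<in> T})"
          using fI by (simp add: sum.inter_filter[symmetric])
        also have "{e\<in>I. e \<in> T} = T" using TI by auto
        finally have "(\<Sum>e\<in>I. if e \<in> T then 1 else (0::int)) = int (card T)" .
        then show "(\<Sum>e\<in>I. if e \<in> T \<and> card T = m \<and> sum f T = 0 then 1 else (0::int)) =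
            int m * (if card T = m \<and> sum f T = 0 then 1 else 0)"
          by (cases "card T = m \<and> sum f T = 0") auto
      qed
      also have "\<dots> = int m * Nc {}" unfolding Nc_def by (simp add: sum_distrib_left)
      finally show ?thesis .
    qed
    ultimately have dm: "int p dvd int m * Nc {}" by simp
    have "\<not> int p dvd Nc {}"
    proof
      assume "int p dvd Nc {}"
      then have "int p dvd (1 - Nc {}) + Nc {}" using N0 by (rule dvd_add[rotated])
      then have "int p dvd 1" by simp
      then show False using p by (simp add: prime_gt_1_nat)
    qed
    then have "int p dvd int m" using dm p by (simp add: prime_dvd_mult_iff)
    then have "p dvd m" by simp
    then show False using mp m1 by (auto dest: dvd_imp_le)
  qed
qed

context
  fixes p :: nat and kk :: nat
  assumes p: "prime p" and cardG: "card (UNIV::'g::{ab_group_add,finite} set) = p ^ kk"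
begin

lemma olson:
  "\<exists>M\<ge>1. (\<forall>(A::nat set) (f::nat \<Rightarrow> 'g). finite A \<longrightarrow> M \<le> card A \<longrightarrow>
      (\<forall>x. int p dvd (\<Sum>T\<in>Pow A. (-1) ^ card T * (if sum f T = x then 1 else 0)))) \<and>
     (\<exists>T::'g multiset. size T = M - 1 \<and> zero_sumfree T)"
proof -
  have "sg (UNIV::'g set)" by (simp add: sg_def)
  from main[OF p cardG this] obtain M where M1: "M \<ge> 1"
    and V: "\<forall>gs. set gs \<subseteq> (UNIV::'g set) \<longrightarrow> M \<le> length gs \<longrightarrow> pz p (Pl gs)"
    and Z: "\<exists>T::'g multiset. set_mset T \<subseteq> UNIV \<and> size T = M - 1 \<and> zero_sumfree T" by blast
  have "\<forall>(A::nat set) (f::nat \<Rightarrow> 'g). finite A \<longrightarrow> M \<le> card A \<longrightarrow>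
      (\<forall>x. int p dvd (\<Sum>T\<in>Pow A. (-1) ^ card T * (if sum f T = x then 1 else 0)))"
  proof (intro allI impI)
    fix A :: "nat set" and f :: "nat \<Rightarrow> 'g" and x
    assume A: "finite A" "M \<le> card A"
    define xs where "xs = sorted_list_of_set A"
    have "pz p (Pl (map f xs))" using V A by (simp add: xs_def)
    moreover have "Pl (map f xs) = (\<Prod>a\<in>A. 1 - mon (f a))"
      unfolding Pl_def xs_def using A
      by (simp add: prod.distinct_set_conv_list[symmetric] comp_def)
    ultimately have "pz p (\<Prod>a\<in>A. 1 - mon (f a))" by simp
    then have "int p dvd coef (\<Prod>a\<in>A. 1 - mon (f a)) x" unfolding pz_def by blast
    then show "int p dvd (\<Sum>T\<in>Pow A. (-1) ^ card T * (if sum f T = x then 1 else 0))"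
      unfolding coef_prod[OF A(1), of f x] .
  qed
  then show ?thesis using M1 Z by blast
qed

lemma final:
  fixes S :: "'g multiset" and i :: nat
  assumes normal: "normal_seq S" and sz: "size S = davenport TYPE('g) + i - 1"
    and i1: "1 \<le> i" and ip: "i \<le> p - 1"
  shows "\<exists>T. S = replicate_mset i 0 + T \<and> zero_sumfree T"
proof -
  obtain M where M1: "M \<ge> 1"
    and Ol: "\<forall>(A::nat set) (f::nat \<Rightarrow> 'g). finite A \<longrightarrow> M \<le> card A \<longrightarrow>
      (\<forall>x. int p dvd (\<Sum>T\<in>Pow A. (-1) ^ card T * (if sum f T = x then 1 else 0)))"
    and Z: "\<exists>T::'g multiset. size T = M - 1 \<and> zero_sumfree T"
    using olson by blast
  define D where "D = davenport TYPE('g)"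
  define P where "P t = (0 < t \<and> (\<forall>S::'g multiset. t \<le> size S \<longrightarrow> (\<exists>S'. S' \<subseteq># S \<and> S' \<noteq> {#} \<and> sum_mset S' = 0)))" for t
  have D_def': "D = (LEAST t. P t)" unfolding D_def davenport_def P_def ..
  have PM: "P M" unfolding P_def
  proof (intro conjI allI impI)
    show "0 < M" using M1 by simp
    fix S :: "'g multiset" assume MS: "M \<le> size S"
    obtain xs where xs: "mset xs = S" using ex_mset by blast
    define A where "A = {..<length xs}"
    have fA: "finite A" and cA: "card A = size S" using xs by (auto simp: A_def)
    have dv: "int p dvd (\<Sum>T\<in>Pow A. (-1) ^ card T * (if sum (nth xs) T = 0 then 1 else (0::int)))"
      using Ol fA cA MS by auto
    show "\<exists>S'. S' \<subseteq># S \<and> S' \<noteq> {#} \<and> sum_mset S' = 0"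
    proof (rule ccontr)
      assume no: "\<not> (\<exists>S'. S' \<subseteq># S \<and> S' \<noteq> {#} \<and> sum_mset S' = 0)"
      have nz: "sum (nth xs) T \<noteq> 0" if "T \<in> Pow A" "T \<noteq> {}" for T
      proof
        assume s0: "sum (nth xs) T = 0"
        have TA: "T \<subseteq> {..<length xs}" using that by (simp add: A_def)
        have fT: "finite T" using TA finite_subset by blast
        have "image_mset (nth xs) (mset_set T) \<subseteq># S" using mset_nth_sub[OF TA] xs by simp
        moreover have "image_mset (nth xs) (mset_set T) \<noteq> {#}" using fT that(2) by (simp add: mset_set_empty_iff)
        moreover have "sum_mset (image_mset (nth xs) (mset_set T)) = 0"
          using s0 by (simp add: sum_unfold_sum_mset)
        ultimately show False using no by blast
      qed
      have "(\<Sum>T\<in>Pow A. (-1) ^ card T * (if sum (nth xs) T = 0 then 1 else (0::int))) =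
          (\<Sum>T\<in>Pow A. if T = {} then 1 else 0)"
        by (rule sum.cong[OF refl]) (use nz in auto)
      also have "\<dots> = 1" using fA by (simp add: sum.delta)
      finally have "int p dvd 1" using dv by simp
      then show False using p by (simp add: prime_gt_1_nat)
    qed
  qed
  have PD: "P D" unfolding D_def' by (rule LeastI[of P M, OF PM])
  obtain T0 :: "'g multiset" where T0: "size T0 = M - 1" "zero_sumfree T0" using Z by blast
  have MD: "M \<le> D"
  proof (rule ccontr)
    assume "\<not> M \<le> D"
    then have "D \<le> size T0" using T0 by simp
    then obtain S' where "S' \<subseteq># T0" "S' \<noteq> {#}" "sum_mset S' = 0" using PD unfolding P_def by blast
    then show False using T0(2) unfolding zero_sumfree_def by blast
  qed
  have DS: "D \<le> size S" and nrm: "\<forall>S'. S' \<subseteq># S \<and> zero_sum S' \<longrightarrow> size S' \<le> size S - D + 1"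
    using normal unfolding normal_seq_def D_def by auto
  have szD: "size S - D + 1 = i" using sz i1 unfolding D_def by simp
  define z where "z = count S 0"
  define R where "R = filter_mset (\<lambda>x. x \<noteq> 0) S"
  have Ssplit: "S = replicate_mset z 0 + R"
  proof -
    have "S = filter_mset (\<lambda>x. x = 0) S + filter_mset (\<lambda>x. \<not> x = 0) S" by (rule multiset_partition)
    then show ?thesis unfolding R_def z_def by (simp add: filter_eq_replicate_mset)
  qed
  show ?thesis
  proof (cases "i \<le> z")
    case True
    have "replicate_mset z 0 \<subseteq># S" using Ssplit mset_subset_eq_add_left by metis
    moreover have "zero_sum (replicate_mset z (0::'g))"
      by (simp add: zero_sum_def sum_mset_replicate_nmul)
    ultimately have "size (replicate_mset z (0::'g)) \<le> i" using nrm szD by metis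
    then have zi: "z = i" using True by simp
    have "zero_sumfree R" unfolding zero_sumfree_def
    proof (intro allI impI notI)
      fix S' assume S': "S' \<subseteq># R \<and> S' \<noteq> {#}" and s0: "sum_mset S' = 0"
      have "replicate_mset z 0 + S' \<subseteq># S" using Ssplit S' by (metis subset_mset.add_left_mono)
      moreover have "zero_sum (replicate_mset z 0 + S')" using s0 by (simp add: zero_sum_def sum_mset_replicate_nmul)
      ultimately have "size (replicate_mset z 0 + S') \<le> i" using nrm szD by metis
      then show False using S' zi by (simp add: nonempty_has_size)
    qed
    then show ?thesis using Ssplit zi by blast
  next
    case False
    define m where "m = i - z"
    obtain rs where rs: "mset rs = R" using ex_mset by blast
    define n where "n = length rs"
    have "size S = z + size R" using Ssplit by (metis size_union size_replicate_mset)
    then have nD: "n = D + m - 1" using sz False unfolding n_def m_def D_def rs[symmetric] by simp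
    have m1: "1 \<le> m" using False unfolding m_def by simp
    have mp: "m < p" using ip i1 unfolding m_def by simp
    have F1: "\<forall>T. T \<subseteq> {..<n} \<longrightarrow> sum (nth rs) T = 0 \<longrightarrow> card T \<le> m"
    proof (intro allI impI)
      fix T assume TA: "T \<subseteq> {..<n}" and s0: "sum (nth rs) T = 0"
      have fT: "finite T" using TA finite_subset by blast
      have "image_mset (nth rs) (mset_set T) \<subseteq># R" using mset_nth_sub[of T rs] TA rs by (simp add: n_def)
      then have "replicate_mset z 0 + image_mset (nth rs) (mset_set T) \<subseteq># S"
        using Ssplit by (metis subset_mset.add_left_mono)
      moreover have "zero_sum (replicate_mset z 0 + image_mset (nth rs) (mset_set T))"
        using s0 by (simp add: zero_sum_def sum_mset_replicate_nmul sum_unfold_sum_mset)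
      ultimately have "size (replicate_mset z 0 + image_mset (nth rs) (mset_set T)) \<le> i"
        using nrm szD by metis
      then show "card T \<le> m" using fT unfolding m_def by simp
    qed
    have F2: "\<forall>e<n. rs ! e \<noteq> 0"
    proof (intro allI impI)
      fix e assume "e < n"
      then have "rs ! e \<in> set rs" by (simp add: n_def)
      then have "rs ! e \<in># R" using rs by (metis set_mset_mset)
      then show "rs ! e \<noteq> 0" unfolding R_def by simp
    qed
    show ?thesis using counting[OF p m1 mp nD MD Ol F1 F2] by simp
  qed
qed

end


theorem theorem2p1:
  fixes p :: nat and S :: "'g::{ab_group_add,finite} multiset" and i :: nat
  assumes "prime p"
    and "\<exists>k. card (UNIV :: 'g set) = p ^ k"
    and "normal_seq S"
    and "size S = davenport TYPE('g) + i - 1"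
    and "1 \<le> i" and "i \<le> p - 1"
  shows "\<exists>T. S = replicate_mset i 0 + T \<and> zero_sumfree T"
proof -
  obtain kk where kk: "card (UNIV :: 'g set) = p ^ kk" using assms(2) by blast
  show ?thesis by (rule final[OF assms(1) kk assms(3) assms(4) assms(5) assms(6)])
qed

end
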